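(* When the profiled empirical log-likelihood $\ell_n(\lambda;\pi,\alpha,u_1,\dots,u_p)$ attains its maximal value (over $(\alpha,u_1,\dots,u_p)$, with $\lambda$ determined by the Lagrange constraint), the Lagrange multiplier is $\widetilde{\lambda}=(n_0+n_1\pi)/n$, where $n_1=n-n_0$.
   Context: Positive–unlabeled data: a labeled positive sample $\mathbf{x}_1,\dots,\mathbf{x}_{n_0}\sim g(\mathbf{x})$ and an unlabeled sample $\mathbf{x}_{n_0+1},\dots,\mathbf{x}_n\sim \pi g(\mathbf{x})+(1-\pi)h(\mathbf{x})$ with $\pi\in(0,1)$. Under the generalized additive exponential tilting model, the density ratio is $\omega(\mathbf{x})=g(\mathbf{x})/h(\mathbf{x})=\exp\{\alpha+\sum_{j=1}^p u_j(x_j)\}$. Setting $p_i=h(\mathbf{x}_i)$ as parameters, the empirical log-likelihood is $\sum_{i=1}^n\log p_i+\sum_{i=1}^{n_0}\log\omega(\mathbf{x}_i)+\sum_{i=n_0+1}^n\log\{\pi\omega(\mathbf{x}_i)+1-\pi\}$, maximized subject to $p_i>0$, $\sum_i p_i=1$, $\sum_i p_i\omega(\mathbf{x}_i)=1$. The Lagrange method gives $p_i=n^{-1}[1+\lambda\{\omega(\mathbf{x}_i)-1\}]^{-1}$, and after profiling out the $p_i$ (dropping a constant) the log-likelihood becomes $\ell_n(\lambda;\pi,\alpha,u_1,\dots,u_p)=-\sum_{i=1}^n\log[1+\lambda\{\omega(\mathbf{x}_i)-1\}]+\sum_{i=1}^{n_0}\log\omega(\mathbf{x}_i)+\sum_{i=n_0+1}^n\log\{\pi\omega(\mathbf{x}_i)+(1-\pi)\}$,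 where the Lagrange multiplier $\lambda$ satisfies $\sum_{i=1}^n\frac{\omega(\mathbf{x}_i)-1}{1+\lambda\{\omega(\mathbf{x}_i)-1\}}=0$ (so $\lambda$ is an implicit function of $\alpha$ and the $u_j$). *)

theory Defs
  imports "HOL-Analysis.Analysis"
begin

text \<open>Sample: points x 0, ..., x (n-1), each a vector with coordinates indexed by the
finite type 'p (so p = CARD('p)).  Indices i < n0 form the labeled positive sample,
indices n0 <= i < n the unlabeled sample.\<close>

definition tilt :: "real \<Rightarrow> ('p::finite \<Rightarrow> real \<Rightarrow> real) \<Rightarrow> ('p \<Rightarrow> real) \<Rightarrow> real" where
  "tilt \<alpha> u y = exp (\<alpha> + (\<Sum>j\<in>UNIV. u j (y j)))"

text \<open>lambda is an admissible Lagrange multiplier for the weights w (w i = omega(x_i)):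
all p_i = 1/(n (1 + lambda (w i - 1))) are positive and the constraint equation holds.\<close>
definition lagrange_ok :: "nat \<Rightarrow> (nat \<Rightarrow> real) \<Rightarrow> real \<Rightarrow> bool" where
  "lagrange_ok n w lam \<longleftrightarrow>
     (\<forall>i<n. 1 + lam * (w i - 1) > 0) \<and>
     (\<Sum>i<n. (w i - 1) / (1 + lam * (w i - 1))) = 0"

definition lagrange_mult :: "nat \<Rightarrow> (nat \<Rightarrow> real) \<Rightarrow> real" where
  "lagrange_mult n w = (THE lam. lagrange_ok n w lam)"

definition ell :: "nat \<Rightarrow> nat \<Rightarrow> real \<Rightarrow> real \<Rightarrow> (nat \<Rightarrow> real) \<Rightarrow> real" where
  "ell n n0 lam \<pi> w =
     - (\<Sum>i<n. ln (1 + lam * (w i - 1)))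
     + (\<Sum>i<n0. ln (w i))
     + (\<Sum>i\<in>{n0..<n}. ln (\<pi> * w i + (1 - \<pi>)))"

end

theory Submission
  imports Defs
begin

lemma f_diff:
  fixes w :: "nat \<Rightarrow> real"
  assumes "\<forall>i<n. 1 + a*(w i - 1) > 0" "\<forall>i<n. 1 + b*(w i - 1) > 0"
  shows "(\<Sum>i<n. (w i - 1)/(1 + a*(w i - 1))) - (\<Sum>i<n. (w i - 1)/(1 + b*(w i - 1)))
     = (b - a) * (\<Sum>i<n. (w i - 1)^2/((1 + a*(w i - 1))*(1 + b*(w i - 1))))"
proof -
  have "\<And>i. i < n \<Longrightarrow> (w i - 1)/(1 + a*(w i - 1)) - (w i - 1)/(1 + b*(w i - 1))
     = (b - a) * ((w i - 1)^2/((1 + a*(w i - 1))*(1 + b*(w i - 1))))"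
  proof -
    fix i assume "i < n"
    then have "1 + a*(w i - 1) > 0" "1 + b*(w i - 1) > 0" using assms by auto
    then show "(w i - 1)/(1 + a*(w i - 1)) - (w i - 1)/(1 + b*(w i - 1))
     = (b - a) * ((w i - 1)^2/((1 + a*(w i - 1))*(1 + b*(w i - 1))))"
      by (simp add: field_simps power2_eq_square)
  qed
  then show ?thesis
    by (simp add: sum_subtractf[symmetric] sum_distrib_left)
qed

lemma S_pos:
  fixes w :: "nat \<Rightarrow> real"
  assumes "\<forall>i<n. 1 + a*(w i - 1) > 0" "\<forall>i<n. 1 + b*(w i - 1) > 0" "\<exists>i<n. w i \<noteq> 1"
  shows "(\<Sum>i<n. (w i - 1)^2/((1 + a*(w i - 1))*(1 + b*(w i - 1)))) > 0"
proof -
  obtain k where k: "k < n" "w k \<noteq> 1" using assms(3) by auto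
  show ?thesis
  proof (rule sum_pos2[of "{..<n}" k])
    show "0 < (w k - 1)^2/((1 + a*(w k - 1))*(1 + b*(w k - 1)))"
      using k assms(1,2) by (auto intro!: divide_pos_pos mult_pos_pos)
    show "\<And>i. i\<in>{..<n} \<Longrightarrow> 0 \<le> (w i - 1)^2/((1 + a*(w i - 1))*(1 + b*(w i - 1)))"
      using assms(1,2) by (auto intro!: divide_nonneg_pos mult_pos_pos)
  qed (use k in auto)
qed

lemma lag_unique:
  assumes "lagrange_ok n w l1" "lagrange_ok n w l2" "\<exists>i<n. w i \<noteq> 1"
  shows "l1 = l2"
proof -
  have p1: "\<forall>i<n. 1 + l1*(w i - 1) > 0" and p2: "\<forall>i<n. 1 + l2*(w i - 1) > 0"
    using assms unfolding lagrange_ok_def by auto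
  have "(l2 - l1) * (\<Sum>i<n. (w i - 1)^2/((1 + l1*(w i - 1))*(1 + l2*(w i - 1)))) = 0"
    using f_diff[OF p1 p2] assms(1,2) unfolding lagrange_ok_def by simp
  with S_pos[OF p1 p2 assms(3)] show ?thesis by simp
qed

lemma lag_mult_eq:
  assumes "lagrange_ok n w l" "\<exists>i<n. w i \<noteq> 1"
  shows "lagrange_mult n w = l"
  unfolding lagrange_mult_def using assms lag_unique by blast

lemma lower_bound:
  fixes w p :: "nat \<Rightarrow> real"
  assumes D: "\<forall>i<n. 1 + l*(w i - 1) > 0" and p: "\<forall>i<n. p i > 0"
    and s1: "(\<Sum>i<n. p i) = 1" and s2: "(\<Sum>i<n. p i * w i) = 1"
  shows "(\<Sum>i<n. ln (real n * p i)) \<le> - (\<Sum>i<n. ln (1 + l*(w i - 1)))"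
proof -
  have "\<And>i. i < n \<Longrightarrow> ln (real n * p i) + ln (1 + l*(w i - 1)) \<le> real n * p i * (1 + l*(w i - 1)) - 1"
  proof -
    fix i assume i: "i < n"
    then have a: "real n * p i > 0" using p by auto
    have b: "1 + l*(w i - 1) > 0" using D i by auto
    have "ln (real n * p i) + ln (1 + l*(w i - 1)) = ln (real n * p i * (1 + l*(w i - 1)))"
      using ln_mult_pos[OF a b] by simp
    also have "\<dots> \<le> real n * p i * (1 + l*(w i - 1)) - 1"
      using a b by (intro ln_le_minus_one) simp
    finally show "ln (real n * p i) + ln (1 + l*(w i - 1)) \<le> real n * p i * (1 + l*(w i - 1)) - 1" .
  qed
  then have "(\<Sum>i<n. ln (real n * p i) + ln (1 + l*(w i - 1))) \<le> (\<Sum>i<n. real n * p i * (1 + l*(w i - 1)) - 1)"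
    by (intro sum_mono) auto
  also have "(\<Sum>i<n. real n * p i * (1 + l*(w i - 1)) - 1)
      = real n * ((\<Sum>i<n. p i) + l * ((\<Sum>i<n. p i * w i) - (\<Sum>i<n. p i))) - real n"
    by (simp add: sum_subtractf sum_distrib_left sum.distrib algebra_simps)
  also have "\<dots> = 0" using s1 s2 by simp
  finally show ?thesis by (simp add: sum.distrib)
qed

lemma affine_pos:
  fixes a b l c :: real
  assumes "a \<le> l" "l \<le> b" "1 + a*c > 0" "1 + b*c > 0"
  shows "1 + l*c > 0"
proof (cases "c \<ge> 0")
  case True
  then have "a*c \<le> l*c" using assms by (intro mult_right_mono) auto
  then show ?thesis using assms by linarith
next
  case False
  then have "b*c \<le> l*c" using assms by (intro mult_right_mono_neg) auto
  then show ?thesis using assms by linarith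
qed

lemma exist_near:
  fixes w :: "nat \<Rightarrow> real"
  assumes ok: "lagrange_ok n w l0" and nd: "\<exists>i<n. w i \<noteq> 1"
  shows "eventually (\<lambda>t. \<exists>l. lagrange_ok n (\<lambda>i. exp t * w i) l) (at 0)"
proof -
  have D0: "\<forall>i<n. 1 + l0*(w i - 1) > 0" and f0: "(\<Sum>i<n. (w i - 1)/(1 + l0*(w i - 1))) = 0"
    using ok unfolding lagrange_ok_def by auto
  have "eventually (\<lambda>d. \<forall>i\<in>{..<n}. 1 + (l0-d)*(w i - 1) > 0 \<and> 1 + (l0+d)*(w i - 1) > 0) (at (0::real))"
  proof (rule eventually_ball_finite)
    show "\<forall>i\<in>{..<n}. eventually (\<lambda>d. 1 + (l0-d)*(w i - 1) > 0 \<and> 1 + (l0+d)*(w i - 1) > 0) (at (0::real))"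
    proof
      fix i assume "i \<in> {..<n}"
      then have pos: "1 + l0*(w i - 1) > 0" using D0 by auto
      have t1: "((\<lambda>d. 1 + (l0-d)*(w i - 1)) \<longlongrightarrow> 1 + (l0-0)*(w i - 1)) (at (0::real))"
        by (intro tendsto_intros)
      have t2: "((\<lambda>d. 1 + (l0+d)*(w i - 1)) \<longlongrightarrow> 1 + (l0+0)*(w i - 1)) (at (0::real))"
        by (intro tendsto_intros)
      show "eventually (\<lambda>d. 1 + (l0-d)*(w i - 1) > 0 \<and> 1 + (l0+d)*(w i - 1) > 0) (at (0::real))"
        using order_tendstoD(1)[OF t1, of 0] order_tendstoD(1)[OF t2, of 0] pos
        by (auto intro: eventually_conj)
    qed
  qed simp
  then obtain d0 where d0: "d0 > 0" "\<And>x. x \<noteq> 0 \<Longrightarrow> dist x 0 < d0 \<Longrightarrow>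
      (\<forall>i\<in>{..<n}. 1 + (l0-x)*(w i - 1) > 0 \<and> 1 + (l0+x)*(w i - 1) > 0)"
    unfolding eventually_at by auto
  define d where "d = d0 / 2"
  have d: "d > 0" using d0 by (simp add: d_def)
  have Dm: "\<forall>i<n. 1 + (l0-d)*(w i - 1) > 0" and Dp: "\<forall>i<n. 1 + (l0+d)*(w i - 1) > 0"
    using d0(2)[of d] d0(1) d by (auto simp: d_def)
  have "(\<Sum>i<n. (w i - 1)/(1 + (l0-d)*(w i - 1))) - (\<Sum>i<n. (w i - 1)/(1 + l0*(w i - 1)))
     = d * (\<Sum>i<n. (w i - 1)^2/((1 + (l0-d)*(w i - 1))*(1 + l0*(w i - 1))))"
    using f_diff[OF Dm D0] by simp
  with S_pos[OF Dm D0 nd] d f0 have fm: "(\<Sum>i<n. (w i - 1)/(1 + (l0-d)*(w i - 1))) > 0"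
    by simp
  have "(\<Sum>i<n. (w i - 1)/(1 + l0*(w i - 1))) - (\<Sum>i<n. (w i - 1)/(1 + (l0+d)*(w i - 1)))
     = d * (\<Sum>i<n. (w i - 1)^2/((1 + l0*(w i - 1))*(1 + (l0+d)*(w i - 1))))"
    using f_diff[OF D0 Dp] by simp
  with S_pos[OF D0 Dp nd] d f0 have fp: "(\<Sum>i<n. (w i - 1)/(1 + (l0+d)*(w i - 1))) < 0"
    by (smt (verit) mult_pos_pos)
  have evD: "eventually (\<lambda>t. \<forall>i\<in>{..<n}. 1 + (l0-d)*(exp t * w i - 1) > 0 \<and> 1 + (l0+d)*(exp t * w i - 1) > 0) (at (0::real))"
  proof (rule eventually_ball_finite)
    show "\<forall>i\<in>{..<n}. eventually (\<lambda>t. 1 + (l0-d)*(exp t * w i - 1) > 0 \<and> 1 + (l0+d)*(exp t * w i - 1) > 0) (at (0::real))"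
    proof
      fix i assume "i \<in> {..<n}"
      then have pos: "1 + (l0-d)*(w i - 1) > 0" "1 + (l0+d)*(w i - 1) > 0" using Dm Dp by auto
      have t1: "((\<lambda>t. 1 + (l0-d)*(exp t * w i - 1)) \<longlongrightarrow> 1 + (l0-d)*(exp 0 * w i - 1)) (at (0::real))"
        by (intro tendsto_intros)
      have t2: "((\<lambda>t. 1 + (l0+d)*(exp t * w i - 1)) \<longlongrightarrow> 1 + (l0+d)*(exp 0 * w i - 1)) (at (0::real))"
        by (intro tendsto_intros)
      show "eventually (\<lambda>t. 1 + (l0-d)*(exp t * w i - 1) > 0 \<and> 1 + (l0+d)*(exp t * w i - 1) > 0) (at (0::real))"
        using order_tendstoD(1)[OF t1, of 0] order_tendstoD(1)[OF t2, of 0] pos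
        by (auto intro: eventually_conj)
    qed
  qed simp
  have tm: "((\<lambda>t. \<Sum>i<n. (exp t * w i - 1)/(1 + (l0-d)*(exp t * w i - 1)))
      \<longlongrightarrow> (\<Sum>i<n. (exp 0 * w i - 1)/(1 + (l0-d)*(exp 0 * w i - 1)))) (at (0::real))"
    using Dm by (intro tendsto_intros) auto
  have tp: "((\<lambda>t. \<Sum>i<n. (exp t * w i - 1)/(1 + (l0+d)*(exp t * w i - 1)))
      \<longlongrightarrow> (\<Sum>i<n. (exp 0 * w i - 1)/(1 + (l0+d)*(exp 0 * w i - 1)))) (at (0::real))"
    using Dp by (intro tendsto_intros) auto
  have evm: "eventually (\<lambda>t. (\<Sum>i<n. (exp t * w i - 1)/(1 + (l0-d)*(exp t * w i - 1))) > 0) (at (0::real))"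
    using order_tendstoD(1)[OF tm, of 0] fm by simp
  have evp: "eventually (\<lambda>t. (\<Sum>i<n. (exp t * w i - 1)/(1 + (l0+d)*(exp t * w i - 1))) < 0) (at (0::real))"
    using order_tendstoD(2)[OF tp, of 0] fp by simp
  show ?thesis
    using evD evm evp
  proof eventually_elim
    case (elim t)
    define v where "v = (\<lambda>i. exp t * w i)"
    have pos: "\<And>l i. l0 - d \<le> l \<Longrightarrow> l \<le> l0 + d \<Longrightarrow> i < n \<Longrightarrow> 1 + l*(v i - 1) > 0"
      using elim(1) by (auto simp: v_def intro: affine_pos)
    have cont: "continuous_on {l0-d..l0+d} (\<lambda>l. \<Sum>i<n. (v i - 1)/(1 + l*(v i - 1)))"
      using pos by (intro continuous_intros) (auto simp: less_le)
    obtain l where l: "l0 - d \<le> l" "l \<le> l0 + d" "(\<Sum>i<n. (v i - 1)/(1 + l*(v i - 1))) = 0"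
      using IVT2'[OF _ _ _ cont, of 0] elim(2,3) d unfolding v_def by force
    have "lagrange_ok n v l"
      unfolding lagrange_ok_def using l pos by auto
    then show ?case unfolding v_def by blast
  qed
qed

theorem proposition1:
  fixes n n0 :: nat
    and x :: "nat \<Rightarrow> ('p::finite \<Rightarrow> real)"
    and U :: "('p \<Rightarrow> real \<Rightarrow> real) set"
    and \<pi>h \<alpha>h :: real
    and uh :: "'p \<Rightarrow> real \<Rightarrow> real"
  assumes n0_pos: "0 < n0" and n0_lt: "n0 < n"
    and pi_h: "0 < \<pi>h" "\<pi>h < 1"
    and u_h: "uh \<in> U"
    and feas_h: "\<exists>lam. lagrange_ok n (\<lambda>i. tilt \<alpha>h uh (x i)) lam"
    and nondeg_h: "\<exists>i<n. tilt \<alpha>h uh (x i) \<noteq> 1"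
    and max_h: "\<And>\<pi> \<alpha> u. 0 < \<pi> \<Longrightarrow> \<pi> < 1 \<Longrightarrow> u \<in> U \<Longrightarrow>
        (\<exists>lam. lagrange_ok n (\<lambda>i. tilt \<alpha> u (x i)) lam) \<Longrightarrow>
        ell n n0 (lagrange_mult n (\<lambda>i. tilt \<alpha> u (x i))) \<pi> (\<lambda>i. tilt \<alpha> u (x i))
          \<le> ell n n0 (lagrange_mult n (\<lambda>i. tilt \<alpha>h uh (x i))) \<pi>h (\<lambda>i. tilt \<alpha>h uh (x i))"
  shows "lagrange_mult n (\<lambda>i. tilt \<alpha>h uh (x i)) = (real n0 + real (n - n0) * \<pi>h) / real n"
proof -
  define w where "w = (\<lambda>i. tilt \<alpha>h uh (x i))"
  obtain l0 where ok: "lagrange_ok n w l0" using feas_h unfolding w_def by auto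
  have nd: "\<exists>i<n. w i \<noteq> 1" using nondeg_h unfolding w_def by auto
  have lm: "lagrange_mult n w = l0" by (rule lag_mult_eq[OF ok nd])
  have wpos: "\<And>i. w i > 0" unfolding w_def tilt_def by simp
  have shift: "\<And>t. (\<lambda>i. tilt (\<alpha>h + t) uh (x i)) = (\<lambda>i. exp t * w i)"
    unfolding w_def tilt_def by (simp add: exp_add[symmetric] algebra_simps)
  define D where "D = (\<lambda>i. 1 + l0 * (w i - 1))"
  have D0: "\<And>i. i < n \<Longrightarrow> D i > 0" using ok unfolding lagrange_ok_def D_def by auto
  have f0: "(\<Sum>i<n. (w i - 1) / D i) = 0" using ok unfolding lagrange_ok_def D_def by auto
  have npos: "real n > 0" using n0_lt by simp
  define E where "E = (\<lambda>i. \<pi>h * w i + (1 - \<pi>h))"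
  have Epos: "\<And>i. E i > 0"
  proof -
    fix i
    have "\<pi>h * w i > 0" using pi_h wpos[of i] by simp
    then show "E i > 0" using pi_h unfolding E_def by simp
  qed
  have maxh0: "ell n n0 (lagrange_mult n (\<lambda>i. tilt \<alpha> u (x i))) \<pi> (\<lambda>i. tilt \<alpha> u (x i))
          \<le> ell n n0 l0 \<pi>h w"
    if "0 < \<pi>" "\<pi> < 1" "u \<in> U" "\<exists>lam. lagrange_ok n (\<lambda>i. tilt \<alpha> u (x i)) lam" for \<pi> \<alpha> u
    using max_h[OF that] lm unfolding w_def by simp

  define \<phi> where "\<phi> = (\<lambda>p. \<Sum>i\<in>{n0..<n}. ln (p * w i + (1 - p)))"
  have phi_le: "\<phi> p \<le> \<phi> \<pi>h" if "0 < p" "p < 1" for p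
  proof -
    have "ell n n0 l0 p w \<le> ell n n0 l0 \<pi>h w"
      using maxh0[OF that u_h, of \<alpha>h] feas_h lm unfolding w_def by simp
    then show ?thesis unfolding ell_def \<phi>_def by simp
  qed
  have dphi: "(\<phi> has_field_derivative (\<Sum>i\<in>{n0..<n}. (w i - 1) / E i)) (at \<pi>h)"
    unfolding \<phi>_def
  proof (rule DERIV_sum)
    fix i assume "i \<in> {n0..<n}"
    show "((\<lambda>p. ln (p * w i + (1 - p))) has_field_derivative (w i - 1) / E i) (at \<pi>h)"
      using Epos[of i] unfolding E_def
      by (auto intro!: derivative_eq_intros simp: field_simps)
  qed
  have E0: "(\<Sum>i\<in>{n0..<n}. (w i - 1) / E i) = 0"
  proof (rule DERIV_local_max[OF dphi])
    show "0 < min \<pi>h (1 - \<pi>h)" using pi_h by simp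
    show "\<forall>y. \<bar>\<pi>h - y\<bar> < min \<pi>h (1 - \<pi>h) \<longrightarrow> \<phi> y \<le> \<phi> \<pi>h"
      using phi_le by (auto simp: abs_if split: if_splits)
  qed

  define V where "V = (\<Sum>i<n. (w i - 1)^2 / (real n * D i))"
  define ph where "ph = (\<lambda>i. 1 / (real n * D i))"
  have Vpos: "V > 0"
  proof -
    obtain k where k: "k < n" "w k \<noteq> 1" using nd by auto
    show ?thesis unfolding V_def
    proof (rule sum_pos2[of "{..<n}" k])
      show "0 < (w k - 1)^2 / (real n * D k)" using k D0[of k] npos by auto
      show "\<And>i. i\<in>{..<n} \<Longrightarrow> 0 \<le> (w i - 1)^2 / (real n * D i)"
        using D0 npos by (auto intro!: divide_nonneg_pos)
    qed (use k in auto)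
  qed
  have sumD: "(\<Sum>i<n. 1 / D i) = real n"
  proof -
    have "(\<Sum>i<n. 1 - 1 / D i) = l0 * (\<Sum>i<n. (w i - 1) / D i)"
      unfolding sum_distrib_left
    proof (rule sum.cong)
      fix i assume "i \<in> {..<n}"
      then have p: "D i > 0" using D0 by auto
      have "1 - 1 / D i = (D i - 1) / D i" using p by (simp add: field_simps)
      also have "D i - 1 = l0 * (w i - 1)" unfolding D_def by simp
      finally show "1 - 1 / D i = l0 * ((w i - 1) / D i)" by simp
    qed simp
    with f0 show ?thesis by (simp add: sum_subtractf)
  qed
  have sumw: "(\<Sum>i<n. (w i - 1)) = l0 * real n * V"
  proof -
    have "(\<Sum>i<n. (w i - 1) - (w i - 1) / D i) = l0 * real n * V"
      unfolding V_def sum_distrib_left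
    proof (rule sum.cong)
      fix i assume "i \<in> {..<n}"
      then have p: "D i > 0" using D0 by auto
      have e1: "(w i - 1) - (w i - 1) / D i = (w i - 1) * (D i - 1) / D i" using p by (simp add: field_simps)
      have e2: "D i - 1 = l0 * (w i - 1)" unfolding D_def by simp
      have e3: "(w i - 1) * (l0 * (w i - 1)) / D i = l0 * real n * ((w i - 1)^2 / (real n * D i))"
        using npos p by (simp add: field_simps power2_eq_square)
      show "(w i - 1) - (w i - 1) / D i = l0 * real n * ((w i - 1)^2 / (real n * D i))"
        using e1 e2 e3 by simp
    qed simp
    with f0 show ?thesis by (simp add: sum_subtractf)
  qed
  have s_ph: "(\<Sum>i<n. ph i) = 1"
  proof -
    have "(\<Sum>i<n. ph i) = (\<Sum>i<n. 1 / D i) / real n"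
      unfolding ph_def sum_divide_distrib by (rule sum.cong) auto
    with sumD npos show ?thesis by simp
  qed
  have s_ph1: "(\<Sum>i<n. ph i * (w i - 1)) = 0"
  proof -
    have "(\<Sum>i<n. ph i * (w i - 1)) = (\<Sum>i<n. (w i - 1) / D i) / real n"
      unfolding ph_def sum_divide_distrib by (rule sum.cong) auto
    with f0 show ?thesis by simp
  qed
  have s_phw: "(\<Sum>i<n. ph i * w i) = 1"
  proof -
    have "(\<Sum>i<n. ph i * w i) = (\<Sum>i<n. ph i) + (\<Sum>i<n. ph i * (w i - 1))"
      by (simp add: sum.distrib[symmetric] algebra_simps)
    with s_ph s_ph1 show ?thesis by simp
  qed
  have s_phww: "(\<Sum>i<n. ph i * w i * (w i - 1)) = V"
  proof -
    have "(\<Sum>i<n. ph i * w i * (w i - 1)) = (\<Sum>i<n. (w i - 1)^2 / (real n * D i)) + (\<Sum>i<n. ph i * (w i - 1))"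
      unfolding sum.distrib[symmetric] ph_def
      by (rule sum.cong) (use D0 npos in \<open>auto simp: add_divide_distrib[symmetric] power2_eq_square algebra_simps\<close>)
    with s_ph1 show ?thesis unfolding V_def by simp
  qed
  have phpos: "\<And>i. i < n \<Longrightarrow> ph i > 0" using D0 npos unfolding ph_def by auto
  define b where "b = (\<lambda>t::real. (exp (- t) - 1) / V)"
  define L where "L = (\<lambda>t. (\<Sum>i<n. ln (real n * ph i)) + (\<Sum>i<n. ln (1 + b t * (w i - 1)))
      + (\<Sum>i<n0. ln (exp t * w i)) + (\<Sum>i\<in>{n0..<n}. ln (\<pi>h * (exp t * w i) + (1 - \<pi>h))))"
  have b0: "b 0 = 0" unfolding b_def by simp
  have L0: "L 0 = ell n n0 l0 \<pi>h w"
  proof -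
    have "(\<Sum>i<n. ln (real n * ph i)) = - (\<Sum>i<n. ln (1 + l0 * (w i - 1)))"
      unfolding sum_negf[symmetric]
      by (rule sum.cong) (use D0 npos in \<open>auto simp: ph_def D_def ln_div\<close>)
    then show ?thesis unfolding L_def ell_def using b0 by simp
  qed
  have evb: "eventually (\<lambda>t. \<forall>i\<in>{..<n}. 1 + b t * (w i - 1) > 0) (at (0::real))"
  proof (rule eventually_ball_finite)
    show "\<forall>i\<in>{..<n}. eventually (\<lambda>t. 1 + b t * (w i - 1) > 0) (at (0::real))"
    proof
      fix i
      have "((\<lambda>t. 1 + b t * (w i - 1)) \<longlongrightarrow> 1 + (exp (- 0) - 1) / V * (w i - 1)) (at (0::real))"
        unfolding b_def using Vpos by (intro tendsto_intros) auto
      then show "eventually (\<lambda>t. 1 + b t * (w i - 1) > 0) (at (0::real))"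
        by (rule order_tendstoD(1)) (simp_all add: b_def)
    qed
  qed simp
  have evnd: "eventually (\<lambda>t. \<exists>i<n. exp t * w i \<noteq> 1) (at (0::real))"
  proof -
    obtain k where k: "k < n" "w k \<noteq> 1" using nd by auto
    have "((\<lambda>t. exp t * w k) \<longlongrightarrow> exp 0 * w k) (at (0::real))" by (intro tendsto_intros)
    then have "eventually (\<lambda>t. exp t * w k \<noteq> 1) (at (0::real))"
      using k by (intro tendsto_imp_eventually_ne) auto
    then show ?thesis by eventually_elim (use k in auto)
  qed
  have evL: "eventually (\<lambda>t. L t \<le> L 0) (at (0::real))"
    using evb evnd exist_near[OF ok nd]
  proof eventually_elim
    case (elim t)
    define v where "v = (\<lambda>i. exp t * w i)"
    obtain lt where okt: "lagrange_ok n v lt" using elim(3) unfolding v_def by auto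
    have lmt: "lagrange_mult n v = lt" by (rule lag_mult_eq[OF okt]) (use elim(2) in \<open>auto simp: v_def\<close>)
    have le1: "ell n n0 lt \<pi>h v \<le> ell n n0 l0 \<pi>h w"
      using maxh0[OF pi_h u_h, of "\<alpha>h + t"] okt lmt unfolding shift v_def by auto
    define p where "p = (\<lambda>i. ph i * (1 + b t * (w i - 1)))"
    have ppos: "\<forall>i<n. p i > 0" using phpos elim(1) unfolding p_def by auto
    have sp: "(\<Sum>i<n. p i) = 1"
    proof -
      have "(\<Sum>i<n. p i) = (\<Sum>i<n. ph i) + b t * (\<Sum>i<n. ph i * (w i - 1))"
        unfolding p_def sum_distrib_left sum.distrib[symmetric] by (rule sum.cong) (auto simp: algebra_simps)
      with s_ph s_ph1 show ?thesis by simp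
    qed
    have spw: "(\<Sum>i<n. p i * v i) = 1"
    proof -
      have "(\<Sum>i<n. p i * v i) = exp t * ((\<Sum>i<n. ph i * w i) + b t * (\<Sum>i<n. ph i * w i * (w i - 1)))"
        unfolding p_def v_def sum_distrib_left sum.distrib[symmetric] by (rule sum.cong) (auto simp: algebra_simps)
      also have "\<dots> = exp t * (1 + b t * V)" using s_phw s_phww by simp
      also have "\<dots> = 1" using Vpos unfolding b_def by (simp add: exp_minus field_simps)
      finally show ?thesis .
    qed
    have Dt: "\<forall>i<n. 1 + lt * (v i - 1) > 0" using okt unfolding lagrange_ok_def by auto
    have lb: "(\<Sum>i<n. ln (real n * p i)) \<le> - (\<Sum>i<n. ln (1 + lt * (v i - 1)))"
      by (rule lower_bound[OF Dt ppos sp spw])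
    have split: "(\<Sum>i<n. ln (real n * p i)) = (\<Sum>i<n. ln (real n * ph i)) + (\<Sum>i<n. ln (1 + b t * (w i - 1)))"
      unfolding sum.distrib[symmetric]
    proof (rule sum.cong)
      fix i assume "i \<in> {..<n}"
      then have a: "real n * ph i > 0" and c: "1 + b t * (w i - 1) > 0" using phpos npos elim(1) by auto
      show "ln (real n * p i) = ln (real n * ph i) + ln (1 + b t * (w i - 1))"
        using ln_mult_pos[OF a c] unfolding p_def by (simp add: mult.assoc)
    qed simp
    have "L t \<le> ell n n0 lt \<pi>h v"
      using lb split unfolding L_def ell_def v_def by simp
    then show ?case using le1 L0 by simp
  qed
  have d1: "((\<lambda>t. \<Sum>i<n. ln (real n * ph i)) has_field_derivative 0) (at 0)" by simp
  have d2: "((\<lambda>t. \<Sum>i<n. ln (1 + b t * (w i - 1))) has_field_derivative (\<Sum>i<n. (- 1 / V) * (w i - 1))) (at 0)"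
  proof (rule DERIV_sum)
    fix i
    show "((\<lambda>t. ln (1 + b t * (w i - 1))) has_field_derivative - 1 / V * (w i - 1)) (at 0)"
      unfolding b_def using Vpos
      by (auto intro!: derivative_eq_intros simp: field_simps)
  qed
  have d3: "((\<lambda>t. \<Sum>i<n0. ln (exp t * w i)) has_field_derivative (\<Sum>i<n0. 1)) (at 0)"
  proof (rule DERIV_sum)
    fix i
    show "((\<lambda>t. ln (exp t * w i)) has_field_derivative 1) (at 0)"
      using wpos[of i] by (auto intro!: derivative_eq_intros simp: field_simps)
  qed
  have d4: "((\<lambda>t. \<Sum>i\<in>{n0..<n}. ln (\<pi>h * (exp t * w i) + (1 - \<pi>h))) has_field_derivative
       (\<Sum>i\<in>{n0..<n}. \<pi>h * w i / E i)) (at 0)"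
  proof (rule DERIV_sum)
    fix i
    show "((\<lambda>t. ln (\<pi>h * (exp t * w i) + (1 - \<pi>h))) has_field_derivative \<pi>h * w i / E i) (at 0)"
      using Epos[of i] unfolding E_def by (auto intro!: derivative_eq_intros simp: field_simps)
  qed
  have dL: "(L has_field_derivative
      ((\<Sum>i<n. (- 1 / V) * (w i - 1)) + (\<Sum>i<n0. 1) + (\<Sum>i\<in>{n0..<n}. \<pi>h * w i / E i))) (at 0)"
    using DERIV_add[OF DERIV_add[OF DERIV_add[OF d1 d2] d3] d4] unfolding L_def by simp
  have dL0: "(\<Sum>i<n. (- 1 / V) * (w i - 1)) + (\<Sum>i<n0. 1) + (\<Sum>i\<in>{n0..<n}. \<pi>h * w i / E i) = 0"
  proof -
    obtain d where d: "d > 0" "\<And>y. y \<noteq> 0 \<Longrightarrow> dist y 0 < d \<Longrightarrow> L y \<le> L 0"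
      using evL unfolding eventually_at by auto
    show ?thesis
    proof (rule DERIV_local_max[OF dL d(1)])
    show "\<forall>y. \<bar>0 - y\<bar> < d \<longrightarrow> L y \<le> L 0" proof (intro allI impI)
      fix y :: real assume y: "\<bar>0 - y\<bar> < d"
      show "L y \<le> L 0"
      proof (cases "y = 0")
        case False
        then show ?thesis using d(2)[of y] y by (simp add: dist_real_def)
      qed simp
    qed
  qed
  qed
  have t1: "(\<Sum>i<n. (- 1 / V) * (w i - 1)) = - l0 * real n"
    proof -
    have "(\<Sum>i<n. (- 1 / V) * (w i - 1)) = (- 1 / V) * (\<Sum>i<n. (w i - 1))"
      by (simp add: sum_distrib_left)
    with sumw Vpos show ?thesis by simp
  qed
  have sumE: "(\<Sum>i\<in>{n0..<n}. 1 / E i) = real (n - n0)"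
  proof -
    have "(\<Sum>i\<in>{n0..<n}. 1 - 1 / E i) = \<pi>h * (\<Sum>i\<in>{n0..<n}. (w i - 1) / E i)"
      unfolding sum_distrib_left
    proof (rule sum.cong)
      fix i
      have p: "E i > 0" by (rule Epos)
      have "1 - 1 / E i = (E i - 1) / E i" using p by (simp add: field_simps)
      also have "E i - 1 = \<pi>h * (w i - 1)" unfolding E_def by (simp add: algebra_simps)
      finally show "1 - 1 / E i = \<pi>h * ((w i - 1) / E i)" by simp
    qed simp
    with E0 show ?thesis by (simp add: sum_subtractf)
  qed
  have t3: "(\<Sum>i\<in>{n0..<n}. \<pi>h * w i / E i) = \<pi>h * real (n - n0)"
  proof -
    have "(\<Sum>i\<in>{n0..<n}. \<pi>h * w i / E i) = (\<Sum>i\<in>{n0..<n}. 1 - (1 - \<pi>h) * (1 / E i))"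
    proof (rule sum.cong)
      fix i
      have p: "E i > 0" by (rule Epos)
      have "\<pi>h * w i = E i - (1 - \<pi>h)" unfolding E_def by simp
      then have "\<pi>h * w i / E i = (E i - (1 - \<pi>h)) / E i" by simp
      also have "\<dots> = 1 - (1 - \<pi>h) * (1 / E i)" using p by (simp add: diff_divide_distrib)
      finally show "\<pi>h * w i / E i = 1 - (1 - \<pi>h) * (1 / E i)" .
    qed simp
    also have "\<dots> = real (n - n0) - (1 - \<pi>h) * real (n - n0)"
      using sumE by (simp only: sum_subtractf sum_distrib_left[symmetric] sum_constant card_atLeastLessThan)
    finally show ?thesis by (simp add: algebra_simps)
  qed
  from dL0 t1 t3 have "- l0 * real n + real n0 + \<pi>h * real (n - n0) = 0" by simp
  then have "l0 = (real n0 + real (n - n0) * \<pi>h) / real n"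
    using npos by (simp add: field_simps)
  then show ?thesis using lm unfolding w_def by simp
qed

end
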